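(* Let $Q=(q_1,\ldots,q_k)$ be an instance of the FIFO stack-up problem and $p$ a positive integer. If the sequence graph $G_Q$ has a directed path-decomposition of width $p-1$, then there is a processing of $Q$ with $p$ stack-up places, i.e. a processing in which every configuration has at most $p$ open pallets.
   Context: A bin $b$ carries a pallet symbol $\mathit{plt}(b)$ (a positive integer). An instance is a list $Q=(q_1,\ldots,q_k)$ of finite sequences of bins, all bins pairwise distinct; it is assumed that for every pallet symbol occurring, the sequences together contain at least two bins destined for it. $\mathit{plts}(Q)$ is the set of pallet symbols occurring in $Q$. A subsequence of $q=(b_1,\ldots,b_n)$ is a suffix $q'=(b_j,\ldots,b_n)$ (possibly empty), and $q-q'=(b_1,\ldots,b_{j-1})$. A configuration is a pair $(Q,Q')$ with $Q'=(q'_1,\ldots,q'_k)$, each $q'_j$ a subsequence of $q_j$. A pallet $t$ is open in $(Q,Q')$ if some bin for $t$ lies in some $q'_i$ and some bin for $t$ lies in some $q_j-q'_j$. A transformation step removes the first bin of one nonempty $q'_i$. A processing of $Q$ is a sequence of transformation steps transforming $(Q,Q)$ into the configuration where all $k$ sequences are empty. The sequence graph $G_Q$ has vertex set $\mathit{plts}(Q)$ and an arc $(u,v)$ iff $u\ne v$ and some sequence $q_i$ contains a bin for $u$ at a position strictly before a bin for $v$. A directed path-decomposition of a digraph $G=(V,E)$ is a sequence $(X_1,\ldots,X_r)$ of subsets of $V$ with: (1) $\bigcup_i X_i=V$; (2) for every arc $(u,v)$ there are $i\le j$ with $u\in X_i$, $v\in X_j$; (3) if $u\in X_i\cap X_j$,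 $i\le j$, then $u\in X_l$ for all $i\le l\le j$. Its width is $\max_i|X_i|-1$. *)

theory Defs
  imports Main
begin

text \<open>Bins are elements of an arbitrary type 'b; plt assigns to each bin its pallet symbol.
An instance Q is a list of k sequences of bins; a configuration is given by the list Q' of
the remaining suffixes.\<close>

definition plts :: "('b \<Rightarrow> nat) \<Rightarrow> 'b list list \<Rightarrow> nat set" where
  "plts plt Q = plt ` set (concat Q)"

definition is_instance :: "('b \<Rightarrow> nat) \<Rightarrow> 'b list list \<Rightarrow> bool" where
  "is_instance plt Q \<longleftrightarrow>
     distinct (concat Q) \<and>
     (\<forall>b \<in> set (concat Q). 0 < plt b) \<and>
     (\<forall>t \<in> plts plt Q. 2 \<le> length (filter (\<lambda>b. plt b = t) (concat Q)))"

definition is_subseq :: "'b list \<Rightarrow> 'b list \<Rightarrow> bool" where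
  "is_subseq q' q \<longleftrightarrow> (\<exists>j \<le> length q. q' = drop j q)"

definition seq_minus :: "'b list \<Rightarrow> 'b list \<Rightarrow> 'b list" where
  "seq_minus q q' = take (length q - length q') q"

definition is_config :: "'b list list \<Rightarrow> 'b list list \<Rightarrow> bool" where
  "is_config Q Q' \<longleftrightarrow> length Q' = length Q \<and>
     (\<forall>j < length Q. is_subseq (Q' ! j) (Q ! j))"

definition open_plts :: "('b \<Rightarrow> nat) \<Rightarrow> 'b list list \<Rightarrow> 'b list list \<Rightarrow> nat set" where
  "open_plts plt Q Q' = {t.
     (\<exists>i < length Q. \<exists>b \<in> set (Q' ! i). plt b = t) \<and>
     (\<exists>j < length Q. \<exists>b \<in> set (seq_minus (Q ! j) (Q' ! j)). plt b = t)}"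

definition trans_step :: "'b list list \<Rightarrow> 'b list list \<Rightarrow> bool" where
  "trans_step Q' Q'' \<longleftrightarrow>
     (\<exists>i < length Q'. Q' ! i \<noteq> [] \<and> Q'' = Q'[i := tl (Q' ! i)])"

text \<open>A processing, given as the list of configurations (second components) it passes through,
from (Q,Q) to the configuration with all sequences empty.\<close>
definition is_processing :: "'b list list \<Rightarrow> 'b list list list \<Rightarrow> bool" where
  "is_processing Q cs \<longleftrightarrow> cs \<noteq> [] \<and> hd cs = Q \<and>
     last cs = replicate (length Q) [] \<and>
     (\<forall>n. Suc n < length cs \<longrightarrow> trans_step (cs ! n) (cs ! Suc n))"

text \<open>Sequence graph G_Q: vertex set plts Q, arc set seq_arcs.\<close>
definition seq_arcs :: "('b \<Rightarrow> nat) \<Rightarrow> 'b list list \<Rightarrow> (nat \<times> nat) set" where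
  "seq_arcs plt Q = {(u, v). u \<noteq> v \<and>
     (\<exists>q \<in> set Q. \<exists>i j. i < j \<and> j < length q \<and> plt (q ! i) = u \<and> plt (q ! j) = v)}"

definition is_dpd :: "'v set \<Rightarrow> ('v \<times> 'v) set \<Rightarrow> 'v set list \<Rightarrow> bool" where
  "is_dpd V E X \<longleftrightarrow> X \<noteq> [] \<and>
     (\<forall>i < length X. X ! i \<subseteq> V) \<and>
     \<Union> (set X) = V \<and>
     (\<forall>(u, v) \<in> E. \<exists>i j. i \<le> j \<and> j < length X \<and> u \<in> X ! i \<and> v \<in> X ! j) \<and>
     (\<forall>u i j l. i \<le> l \<and> l \<le> j \<and> j < length X \<and> u \<in> X ! i \<and> u \<in> X ! j \<longrightarrow> u \<in> X ! l)"

definition dpd_width :: "'v set list \<Rightarrow> int" where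
  "dpd_width X = int (Max (card ` set X)) - 1"

end

theory Submission
  imports Defs
begin

locale fifo =
  fixes plt :: "'b \<Rightarrow> nat" and Q :: "'b list list" and X :: "nat set list" and p :: nat
  assumes dpd: "is_dpd (plts plt Q) (seq_arcs plt Q) X"
  and maxp: "Max (card ` set X) = p"
begin

lemma X_ne: "X \<noteq> []" using dpd by (simp add: is_dpd_def)
lemma X_sub: "i < length X \<Longrightarrow> X!i \<subseteq> plts plt Q" using dpd by (simp add: is_dpd_def)
lemma X_union: "\<Union>(set X) = plts plt Q" using dpd by (simp add: is_dpd_def)
lemma X_arc: "(u,v) \<in> seq_arcs plt Q \<Longrightarrow> \<exists>i j. i \<le> j \<and> j < length X \<and> u \<in> X!i \<and> v \<in> X!j"
  using dpd unfolding is_dpd_def by blast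
lemma X_int: "i \<le> l \<Longrightarrow> l \<le> j \<Longrightarrow> j < length X \<Longrightarrow> u \<in> X!i \<Longrightarrow> u \<in> X!j \<Longrightarrow> u \<in> X!l"
  using dpd unfolding is_dpd_def by blast

lemma X_in: "t \<in> plts plt Q \<Longrightarrow> \<exists>l. l < length X \<and> t \<in> X!l"
proof -
  assume "t \<in> plts plt Q"
  then obtain x where "x \<in> set X" "t \<in> x" using X_union by blast
  thus ?thesis by (auto simp: in_set_conv_nth)
qed

definition f where "f t = (LEAST i. t \<in> X!i)"

lemma inV: "j < length Q \<Longrightarrow> i < length (Q!j) \<Longrightarrow> plt (Q!j!i) \<in> plts plt Q"
proof -
  assume h: "j < length Q" "i < length (Q!j)"
  have "Q!j \<in> set Q" using h(1) by (rule nth_mem)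
  moreover have "Q!j!i \<in> set (Q!j)" using h(2) by (rule nth_mem)
  ultimately have "Q!j!i \<in> set (concat Q)" by auto
  thus ?thesis unfolding plts_def by (rule imageI)
qed

lemma fV: assumes "t \<in> plts plt Q" shows "f t < length X \<and> t \<in> X!(f t)"
proof -
  obtain l where l: "l < length X" "t \<in> X!l" using X_in assms by blast
  have "t \<in> X!(f t)" unfolding f_def using l(2) by (rule LeastI)
  moreover have "f t \<le> l" unfolding f_def using l(2) by (rule Least_le)
  ultimately show ?thesis using l(1) by simp
qed

lemma f_le: "t \<in> X!l \<Longrightarrow> f t \<le> l" unfolding f_def by (rule Least_le)

definition conf where "conf ns = map (\<lambda>j. drop (ns!j) (Q!j)) [0..<length Q]"

definition inv where "inv k ns \<longleftrightarrow> k < length X \<and> length ns = length Q \<and>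
  (\<forall>j<length Q. \<forall>i<length (Q!j). i < ns!j \<longrightarrow> f (plt (Q!j!i)) \<le> k) \<and>
  (\<forall>j<length Q. \<forall>i<length (Q!j). ns!j \<le> i \<longrightarrow> (\<exists>l. k \<le> l \<and> l < length X \<and> plt (Q!j!i) \<in> X!l))"

lemma card_bound: "k < length X \<Longrightarrow> card (X!k) \<le> p"
proof -
  assume k: "k < length X"
  have "card (X!k) \<le> Max (card ` set X)" by (rule Max_ge) (use k in auto)
  thus ?thesis using maxp by simp
qed

lemma seqm: "seq_minus q (drop n q) = take n q"
  by (cases "n \<le> length q") (auto simp: seq_minus_def)

lemma in_drop: "b \<in> set (drop n q) \<Longrightarrow> \<exists>i. n \<le> i \<and> i < length q \<and> q!i = b"
proof -
  assume "b \<in> set (drop n q)"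
  then obtain i' where "i' < length (drop n q)" "drop n q ! i' = b" by (auto simp: in_set_conv_nth)
  thus ?thesis by (intro exI[of _ "n + i'"]) auto
qed

lemma in_take: "b \<in> set (take n q) \<Longrightarrow> \<exists>i. i < n \<and> i < length q \<and> q!i = b"
proof -
  assume "b \<in> set (take n q)"
  then obtain i' where "i' < length (take n q)" "take n q ! i' = b" by (auto simp: in_set_conv_nth)
  thus ?thesis by (intro exI[of _ i']) auto
qed

lemma conf_nth: "j < length Q \<Longrightarrow> conf ns ! j = drop (ns!j) (Q!j)"
  by (simp add: conf_def)

lemma open_sub: assumes inv: "inv k ns" shows "open_plts plt Q (conf ns) \<subseteq> X!k"
proof
  fix t assume "t \<in> open_plts plt Q (conf ns)"
  then obtain i b j b' where i: "i < length Q" "b \<in> set (drop (ns!i) (Q!i))" "plt b = t"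
    and j: "j < length Q" "b' \<in> set (take (ns!j) (Q!j))" "plt b' = t"
    by (auto simp: open_plts_def conf_nth seqm)
  obtain a where a: "ns!i \<le> a" "a < length (Q!i)" "Q!i!a = b" using in_drop[OF i(2)] by blast
  obtain c where c: "c < ns!j" "c < length (Q!j)" "Q!j!c = b'" using in_take[OF j(2)] by blast
  have fk: "f t \<le> k" using inv j c unfolding inv_def by auto
  obtain l where l: "k \<le> l" "l < length X" "t \<in> X!l" using inv i a unfolding inv_def by blast
  have "t \<in> X!(f t)" using fV inV[OF j(1) c(2)] c j by auto
  thus "t \<in> X!k" using X_int[OF fk l(1) l(2) _ l(3)] by blast
qed

lemma fin_plts: "finite (plts plt Q)" by (simp add: plts_def)

lemma open_card: "inv k ns \<Longrightarrow> card (open_plts plt Q (conf ns)) \<le> p"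
proof -
  assume inv: "inv k ns"
  hence k: "k < length X" by (simp add: inv_def)
  have "finite (X!k)" using X_sub[OF k] fin_plts finite_subset by blast
  hence "card (open_plts plt Q (conf ns)) \<le> card (X!k)" using open_sub[OF inv] card_mono by blast
  thus ?thesis using card_bound[OF k] by simp
qed

lemma step: assumes inv: "inv k ns" and j0: "j0 < length Q" "ns!j0 < length (Q!j0)"
  and mn: "\<forall>j. j<length Q \<and> ns!j < length (Q!j) \<longrightarrow> f (plt (Q!j0!(ns!j0))) \<le> f (plt (Q!j!(ns!j)))"
  shows "inv (max k (f (plt (Q!j0!(ns!j0))))) (ns[j0 := Suc (ns!j0)])"
proof -
  define g where "g = f (plt (Q!j0!(ns!j0)))"
  define ns' where "ns' = ns[j0 := Suc (ns!j0)]"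
  have len: "length ns = length Q" using inv by (simp add: inv_def)
  have gX: "g < length X" using fV[OF inV[OF j0]] g_def by simp
  have A: "\<forall>j<length Q. \<forall>i<length (Q!j). i < ns'!j \<longrightarrow> f (plt (Q!j!i)) \<le> max k g"
  proof (intro allI impI)
    fix j i assume h: "j < length Q" "i < length (Q!j)" "i < ns'!j"
    show "f (plt (Q!j!i)) \<le> max k g"
    proof (cases "j = j0 \<and> i = ns!j0")
      case True thus ?thesis by (simp add: g_def)
    next
      case False
      hence "i < ns!j" using h len j0 by (auto simp: ns'_def nth_list_update split: if_splits)
      thus ?thesis using inv h unfolding inv_def by fastforce
    qed
  qed
  have B: "\<forall>j<length Q. \<forall>i<length (Q!j). ns'!j \<le> i \<longrightarrow> (\<exists>l. max k g \<le> l \<and> l < length X \<and> plt (Q!j!i) \<in> X!l)"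
  proof (intro allI impI)
    fix j i assume h: "j < length Q" "i < length (Q!j)" "ns'!j \<le> i"
    have h2: "ns!j \<le> i" using h len j0 by (auto simp: ns'_def nth_list_update split: if_splits)
    show "\<exists>l. max k g \<le> l \<and> l < length X \<and> plt (Q!j!i) \<in> X!l"
    proof (cases "g \<le> k")
      case True thus ?thesis using inv h h2 unfolding inv_def by (simp add: max_def)
    next
      case False
      have fr: "ns!j < length (Q!j)" using h h2 by simp
      have gj: "g \<le> f (plt (Q!j!(ns!j)))" using mn h fr g_def by blast
      have cV: "plt (Q!j!(ns!j)) \<in> plts plt Q" using inV[OF h(1) fr] .
      show ?thesis
      proof (cases "plt (Q!j!(ns!j)) = plt (Q!j!i)")
        case True
        thus ?thesis using fV[OF cV] gj False by (intro exI[of _ "f (plt (Q!j!(ns!j)))"]) auto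
      next
        case ne: False
        hence lt: "ns!j < i" using h2 le_neq_implies_less by blast
        have "(plt (Q!j!(ns!j)), plt (Q!j!i)) \<in> seq_arcs plt Q"
          unfolding seq_arcs_def using ne lt h by (auto intro!: nth_mem)
        then obtain a b where ab: "a \<le> b" "b < length X" "plt (Q!j!(ns!j)) \<in> X!a" "plt (Q!j!i) \<in> X!b"
          using X_arc by blast
        have "f (plt (Q!j!(ns!j))) \<le> a" using f_le ab(3) .
        thus ?thesis using ab gj False by (intro exI[of _ b]) auto
      qed
    qed
  qed
  have "max k g < length X" using inv gX by (simp add: inv_def)
  thus ?thesis using A B len unfolding inv_def ns'_def g_def by simp
qed

lemma conf_step: assumes "length ns = length Q" "j0 < length Q" "ns!j0 < length (Q!j0)"
  shows "trans_step (conf ns) (conf (ns[j0 := Suc (ns!j0)]))"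
proof -
  have e: "conf (ns[j0 := Suc (ns!j0)]) = (conf ns)[j0 := drop (Suc (ns!j0)) (Q!j0)]"
    using assms by (auto simp: conf_def nth_list_update intro!: nth_equalityI)
  have t: "tl (conf ns ! j0) = drop (Suc (ns!j0)) (Q!j0)"
    using assms by (simp add: conf_nth drop_Suc tl_drop)
  have ne: "conf ns ! j0 \<noteq> []" using assms by (simp add: conf_nth)
  show ?thesis unfolding trans_step_def
    using e t ne assms by (intro exI[of _ j0]) (simp add: conf_def)
qed

lemma conf_final: "\<forall>j<length Q. length (Q!j) \<le> ns!j \<Longrightarrow> conf ns = replicate (length Q) []"
  by (auto simp: conf_def intro!: nth_equalityI)

definition M where "M ns = (\<Sum>j<length Q. length (Q!j) - ns!j)"

lemma M_dec: "length ns = length Q \<Longrightarrow> j0 < length Q \<Longrightarrow> ns!j0 < length (Q!j0) \<Longrightarrow>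
   M (ns[j0 := Suc (ns!j0)]) < M ns"
  unfolding M_def
  by (rule sum_strict_mono_ex1) (auto simp: nth_list_update)

lemma main: "inv k ns \<Longrightarrow> \<exists>cs. cs \<noteq> [] \<and> hd cs = conf ns \<and> last cs = replicate (length Q) [] \<and>
   (\<forall>n. Suc n < length cs \<longrightarrow> trans_step (cs!n) (cs!Suc n)) \<and>
   (\<forall>c\<in>set cs. card (open_plts plt Q c) \<le> p)"
proof (induction "M ns" arbitrary: k ns rule: less_induct)
  case less
  show ?case
  proof (cases "\<forall>j<length Q. length (Q!j) \<le> ns!j")
    case True
    thus ?thesis using open_card[OF less.prems] conf_final[OF True]
      by (intro exI[of _ "[conf ns]"]) auto
  next
    case False
    then obtain j1 where j1: "j1 < length Q \<and> ns!j1 < length (Q!j1)" by (auto simp: not_le)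
    obtain j0 where j0: "j0 < length Q \<and> ns!j0 < length (Q!j0)"
      "\<forall>j. j < length Q \<and> ns!j < length (Q!j) \<longrightarrow> f (plt (Q!j0!(ns!j0))) \<le> f (plt (Q!j!(ns!j)))"
      using ex_has_least_nat[of "\<lambda>j. j < length Q \<and> ns!j < length (Q!j)" j1 "\<lambda>j. f (plt (Q!j!(ns!j)))"] j1
      by blast
    define ns' where "ns' = ns[j0 := Suc (ns!j0)]"
    have len: "length ns = length Q" using less.prems by (simp add: inv_def)
    have inv': "inv (max k (f (plt (Q!j0!(ns!j0))))) ns'"
      unfolding ns'_def by (rule step[OF less.prems]) (use j0 in auto)
    have "M ns' < M ns" unfolding ns'_def using M_dec len j0 by blast
    then obtain cs where cs: "cs \<noteq> []" "hd cs = conf ns'" "last cs = replicate (length Q) []"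
      "\<forall>n. Suc n < length cs \<longrightarrow> trans_step (cs!n) (cs!Suc n)"
      "\<forall>c\<in>set cs. card (open_plts plt Q c) \<le> p"
      using less.hyps inv' by blast
    have ts: "trans_step (conf ns) (conf ns')" unfolding ns'_def using conf_step len j0 by blast
    have steps: "\<forall>n. Suc n < length (conf ns # cs) \<longrightarrow> trans_step ((conf ns # cs)!n) ((conf ns # cs)!Suc n)"
    proof (intro allI impI)
      fix n assume "Suc n < length (conf ns # cs)"
      thus "trans_step ((conf ns # cs)!n) ((conf ns # cs)!Suc n)"
        using ts cs by (cases n) (auto simp: hd_conv_nth)
    qed
    show ?thesis using cs steps open_card[OF less.prems]
      by (intro exI[of _ "conf ns # cs"]) auto
  qed
qed

end

theorem theorem2:
  fixes plt :: "'b \<Rightarrow> nat" and Q :: "'b list list" and p :: nat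
    and X :: "nat set list"
  assumes "is_instance plt Q"
    and "0 < p"
    and "is_dpd (plts plt Q) (seq_arcs plt Q) X"
    and "dpd_width X = int p - 1"
  shows "\<exists>cs. is_processing Q cs \<and> (\<forall>c \<in> set cs. card (open_plts plt Q c) \<le> p)"
proof -
  have mx: "Max (card ` set X) = p" using assms(4) by (simp add: dpd_width_def)
  interpret fifo plt Q X p using assms(3) mx by unfold_locales
  have i0: "inv 0 (replicate (length Q) 0)"
    unfolding inv_def
  proof (intro conjI allI impI)
    show "0 < length X" using X_ne by simp
  next
    fix j i assume h: "j < length Q" "i < length (Q!j)"
    obtain l where "l < length X" "plt (Q!j!i) \<in> X!l"
      using inV[OF h] X_in by blast
    thus "\<exists>l\<ge>0. l < length X \<and> plt (Q!j!i) \<in> X!l" by blast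
  qed auto
  have c0: "conf (replicate (length Q) 0) = Q" by (auto simp: conf_def intro!: nth_equalityI)
  show ?thesis using main[OF i0] c0 unfolding is_processing_def by auto
qed

end
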